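(* Let $(A_1,A_2,A_3)$ take values in $\{0,1\}^3$ with a palindromic distribution $p$ (i.e. $p(a)=p(\sim a)$ for all $a$) with $p(a)>0$ for all $a$. Let $\lambda_{12}=2^{-3}\sum_{a\in\{0,1\}^3}(-1)^{a_1+a_2}\log p(a)$ be the two-factor log-linear interaction of $A_1,A_2$; let $\rho_{12|3}$ be the correlation of $A_1$ and $A_2$ in the conditional distribution given $A_3=0$ (which equals the conditional correlation given $A_3=1$); let $\rho_{st}$ denote the marginal Pearson correlation of $A_s,A_t$ and $\rho_{12.3}=(\rho_{12}-\rho_{13}\rho_{23})/\{(1-\rho_{13}^2)(1-\rho_{23}^2)\}^{1/2}$ the partial correlation. Then (i) $A_1\perp\!\!\!\perp A_2\mid A_3 \iff \lambda_{12}=0\iff \rho_{12|3}=0\iff\rho_{12.3}=0$; (ii) the conditional dependence of $A_1,A_2$ given $A_3$ is positive $\iff\lambda_{12}>0\iff\rho_{12|3}>0\iff\rho_{12.3}>0$; (iii) the conditional dependence of $A_1,A_2$ given $A_3$ is negative $\iff\lambda_{12}<0\iff\rho_{12|3}<0\iff\rho_{12.3}<0$.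
   Context: $\sim a$ denotes the complement of the binary vector $a$. A conditional dependence of $A_1,A_2$ given $A_3$ is called positive (negative) if the conditional correlation $\rho_{12|3}$ is positive (negative), equivalently if the conditional odds-ratio is $>1$ ($<1$). *)

theory Defs
  imports Complex_Main
begin

text \<open>A distribution of (A1,A2,A3) on {0,1}^3 is a function p :: nat => nat => nat => real,
  only its values on {0,1}^3 matter.\<close>

definition bin :: "nat set" where "bin = {0, 1}"

definition is_dist3 :: "(nat \<Rightarrow> nat \<Rightarrow> nat \<Rightarrow> real) \<Rightarrow> bool" where
  "is_dist3 p \<longleftrightarrow> (\<forall>a1\<in>bin. \<forall>a2\<in>bin. \<forall>a3\<in>bin. p a1 a2 a3 \<ge> 0)
     \<and> (\<Sum>a1\<in>bin. \<Sum>a2\<in>bin. \<Sum>a3\<in>bin. p a1 a2 a3) = 1"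

definition palindromic :: "(nat \<Rightarrow> nat \<Rightarrow> nat \<Rightarrow> real) \<Rightarrow> bool" where
  "palindromic p \<longleftrightarrow> (\<forall>a1\<in>bin. \<forall>a2\<in>bin. \<forall>a3\<in>bin. p a1 a2 a3 = p (1 - a1) (1 - a2) (1 - a3))"

definition bcorr :: "(nat \<Rightarrow> nat \<Rightarrow> real) \<Rightarrow> real" where
  "bcorr r = (let mx = r 1 0 + r 1 1; my = r 0 1 + r 1 1
              in (r 1 1 - mx * my) / sqrt (mx * (1 - mx) * my * (1 - my)))"

definition lambda12 :: "(nat \<Rightarrow> nat \<Rightarrow> nat \<Rightarrow> real) \<Rightarrow> real" where
  "lambda12 p = (1 / 2^3) * (\<Sum>a1\<in>bin. \<Sum>a2\<in>bin. \<Sum>a3\<in>bin.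
      (-1) ^ (a1 + a2) * ln (p a1 a2 a3))"

definition cond12 :: "(nat \<Rightarrow> nat \<Rightarrow> nat \<Rightarrow> real) \<Rightarrow> nat \<Rightarrow> nat \<Rightarrow> nat \<Rightarrow> real" where
  "cond12 p c a1 a2 = p a1 a2 c / (\<Sum>b1\<in>bin. \<Sum>b2\<in>bin. p b1 b2 c)"

definition rho12_3cond :: "(nat \<Rightarrow> nat \<Rightarrow> nat \<Rightarrow> real) \<Rightarrow> real" where
  "rho12_3cond p = bcorr (cond12 p 0)"

definition marg12 :: "(nat \<Rightarrow> nat \<Rightarrow> nat \<Rightarrow> real) \<Rightarrow> nat \<Rightarrow> nat \<Rightarrow> real" where
  "marg12 p x y = (\<Sum>c\<in>bin. p x y c)"
definition marg13 :: "(nat \<Rightarrow> nat \<Rightarrow> nat \<Rightarrow> real) \<Rightarrow> nat \<Rightarrow> nat \<Rightarrow> real" where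
  "marg13 p x z = (\<Sum>b\<in>bin. p x b z)"
definition marg23 :: "(nat \<Rightarrow> nat \<Rightarrow> nat \<Rightarrow> real) \<Rightarrow> nat \<Rightarrow> nat \<Rightarrow> real" where
  "marg23 p y z = (\<Sum>a\<in>bin. p a y z)"

definition partial_corr :: "(nat \<Rightarrow> nat \<Rightarrow> nat \<Rightarrow> real) \<Rightarrow> real" where
  "partial_corr p = (let r12 = bcorr (marg12 p); r13 = bcorr (marg13 p); r23 = bcorr (marg23 p)
     in (r12 - r13 * r23) / sqrt ((1 - r13^2) * (1 - r23^2)))"

definition cond_indep12_3 :: "(nat \<Rightarrow> nat \<Rightarrow> nat \<Rightarrow> real) \<Rightarrow> bool" where
  "cond_indep12_3 p \<longleftrightarrow> (\<forall>a1\<in>bin. \<forall>a2\<in>bin. \<forall>a3\<in>bin.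
     p a1 a2 a3 * (\<Sum>b1\<in>bin. \<Sum>b2\<in>bin. p b1 b2 a3)
       = (\<Sum>b2\<in>bin. p a1 b2 a3) * (\<Sum>b1\<in>bin. p b1 a2 a3))"

definition cond_odds_ratio :: "(nat \<Rightarrow> nat \<Rightarrow> nat \<Rightarrow> real) \<Rightarrow> nat \<Rightarrow> real" where
  "cond_odds_ratio p c = (p 1 1 c * p 0 0 c) / (p 1 0 c * p 0 1 c)"

definition cond_dep_positive :: "(nat \<Rightarrow> nat \<Rightarrow> nat \<Rightarrow> real) \<Rightarrow> bool" where
  "cond_dep_positive p \<longleftrightarrow> (\<forall>c\<in>bin. cond_odds_ratio p c > 1)"
definition cond_dep_negative :: "(nat \<Rightarrow> nat \<Rightarrow> nat \<Rightarrow> real) \<Rightarrow> bool" where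
  "cond_dep_negative p \<longleftrightarrow> (\<forall>c\<in>bin. cond_odds_ratio p c < 1)"

end

theory Submission
  imports Defs
begin

lemma sgn_helper:
  fixes D k s x :: real
  assumes "x = k * D / s" "k > 0" "s > 0"
  shows "(x = 0 \<longleftrightarrow> D = 0) \<and> (x > 0 \<longleftrightarrow> D > 0) \<and> (x < 0 \<longleftrightarrow> D < 0)"
  using assms by (auto simp: zero_less_divide_iff divide_less_0_iff zero_less_mult_iff mult_less_0_iff)

lemma bcorr_half:
  fixes r :: "nat \<Rightarrow> nat \<Rightarrow> real"
  assumes "r 1 0 + r 1 1 = 1/2" "r 0 1 + r 1 1 = 1/2"
  shows "bcorr r = 4 * r 1 1 - 1"
proof -
  have s: "sqrt (1/2 * (1 - 1/2) * (1/2) * (1 - 1/2)) = (1/4::real)"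
    by (simp add: real_sqrt_divide)
  show ?thesis unfolding bcorr_def Let_def assms s by simp
qed

theorem proposition3p1:
  fixes p :: "nat \<Rightarrow> nat \<Rightarrow> nat \<Rightarrow> real"
  assumes dist: "is_dist3 p"
    and pos: "\<forall>a1\<in>bin. \<forall>a2\<in>bin. \<forall>a3\<in>bin. p a1 a2 a3 > 0"
    and pal: "palindromic p"
  shows "(cond_indep12_3 p \<longleftrightarrow> lambda12 p = 0)
       \<and> (lambda12 p = 0 \<longleftrightarrow> rho12_3cond p = 0)
       \<and> (rho12_3cond p = 0 \<longleftrightarrow> partial_corr p = 0)
       \<and> (cond_dep_positive p \<longleftrightarrow> lambda12 p > 0)
       \<and> (lambda12 p > 0 \<longleftrightarrow> rho12_3cond p > 0)
       \<and> (rho12_3cond p > 0 \<longleftrightarrow> partial_corr p > 0)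
       \<and> (cond_dep_negative p \<longleftrightarrow> lambda12 p < 0)
       \<and> (lambda12 p < 0 \<longleftrightarrow> rho12_3cond p < 0)
       \<and> (rho12_3cond p < 0 \<longleftrightarrow> partial_corr p < 0)
       \<and> bcorr (cond12 p 1) = rho12_3cond p"
proof -
  define a where "a = p 0 0 0"
  define b where "b = p 0 0 1"
  define c where "c = p 0 1 0"
  define d where "d = p 1 0 0"
  have P: "p 0 0 0 = a" "p 1 1 1 = a" "p 0 0 1 = b" "p 1 1 0 = b"
          "p 0 1 0 = c" "p 1 0 1 = c" "p 1 0 0 = d" "p 0 1 1 = d"
  proof -
    have h: "\<And>x y z. x \<in> bin \<Longrightarrow> y \<in> bin \<Longrightarrow> z \<in> bin \<Longrightarrow> p x y z = p (1-x) (1-y) (1-z)"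
      using pal unfolding palindromic_def by blast
    have b0: "(0::nat) \<in> bin" and b1: "(1::nat) \<in> bin" by (auto simp: bin_def)
    show "p 0 0 0 = a" "p 0 0 1 = b" "p 0 1 0 = c" "p 1 0 0 = d"
      by (simp_all add: a_def b_def c_def d_def)
    show "p 1 1 1 = a" using h[OF b1 b1 b1] by (simp add: a_def)
    show "p 1 1 0 = b" using h[OF b1 b1 b0] by (simp add: b_def)
    show "p 1 0 1 = c" using h[OF b1 b0 b1] by (simp add: c_def)
    show "p 0 1 1 = d" using h[OF b0 b1 b1] by (simp add: d_def)
  qed
  note P = P P[unfolded One_nat_def]
  have ap: "a > 0" and bp: "b > 0" and cp: "c > 0" and dp: "d > 0"
    using pos unfolding bin_def a_def b_def c_def d_def by auto
  have S: "a + b + c + d = 1/2"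
    using dist unfolding is_dist3_def bin_def by (simp add: P)
  have dd: "d = 1/2 - a - b - c" using S by simp
  define D where "D = a*b - c*d"
  have lam: "lambda12 p = (ln a + ln b - ln c - ln d) / 4"
    unfolding lambda12_def bin_def by (simp add: P)
  have lamsg: "(lambda12 p = 0 \<longleftrightarrow> D = 0) \<and> (lambda12 p > 0 \<longleftrightarrow> D > 0) \<and> (lambda12 p < 0 \<longleftrightarrow> D < 0)"
  proof -
    have e: "ln a + ln b - ln c - ln d = ln (a*b) - ln (c*d)"
      using ap bp cp dp by (simp add: ln_mult)
    have ab: "a*b > 0" "c*d > 0" using ap bp cp dp by auto
    show ?thesis unfolding lam D_def e using ab by auto
  qed
  have ci: "cond_indep12_3 p \<longleftrightarrow> D = 0"
    unfolding cond_indep12_3_def bin_def D_def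
    by (simp add: P algebra_simps) (auto simp: algebra_simps)
  have pos3: "cond_dep_positive p \<longleftrightarrow> D > 0"
    unfolding cond_dep_positive_def cond_odds_ratio_def bin_def D_def
    using ap bp cp dp by (simp add: P mult.commute mult.left_commute)
  have neg3: "cond_dep_negative p \<longleftrightarrow> D < 0"
    unfolding cond_dep_negative_def cond_odds_ratio_def bin_def D_def
    using ap bp cp dp by (simp add: P mult.commute mult.left_commute)
  define Q where "Q = sqrt ((2*(d+b)) * (1 - 2*(d+b)) * (2*(c+b)) * (1 - 2*(c+b)))"
  have Qp: "Q > 0" unfolding Q_def using S ap bp cp dp by (auto intro!: mult_pos_pos)
  have rho: "rho12_3cond p = 4 * D / Q"
  proof -
    have "rho12_3cond p = (2*b - 2*(d+b) * (2*(c+b))) / Q"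
      unfolding rho12_3cond_def bcorr_def cond12_def bin_def Q_def Let_def
      by (simp add: P S[simplified add.assoc] add.commute add.left_commute mult.commute) 
    also have "2*b - 2*(d+b) * (2*(c+b)) = 4 * D"
      unfolding D_def dd by (simp add: algebra_simps)
    finally show ?thesis .
  qed
  have rho1: "bcorr (cond12 p 1) = rho12_3cond p"
  proof -
    have "bcorr (cond12 p 1) = (2*a - 2*(c+a) * (2*(d+a))) / sqrt ((2*(c+a)) * (1 - 2*(c+a)) * (2*(d+a)) * (1 - 2*(d+a)))"
      unfolding bcorr_def cond12_def bin_def Let_def
      by (simp add: P S[simplified add.assoc] add.commute add.left_commute mult.commute)
    also have "(2*(c+a)) * (1 - 2*(c+a)) * (2*(d+a)) * (1 - 2*(d+a)) = (2*(d+b)) * (1 - 2*(d+b)) * (2*(c+b)) * (1 - 2*(c+b))"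
      unfolding dd by (simp add: algebra_simps)
    also have "2*a - 2*(c+a) * (2*(d+a)) = 4 * D"
      unfolding D_def dd by (simp add: algebra_simps)
    finally show ?thesis using rho Q_def by simp
  qed
  define R where "R = sqrt ((1 - (4*(a+c)-1)^2) * (1 - (4*(a+d)-1)^2))"
  have e1: "1 - (4*(a+c)-1)^2 = 8*(a+c)*(1 - 2*(a+c))" by (simp add: power2_eq_square algebra_simps)
  have e2: "1 - (4*(a+d)-1)^2 = 8*(a+d)*(1 - 2*(a+d))" by (simp add: power2_eq_square algebra_simps)
  have f1: "8*(a+c)*(1 - 2*(a+c)) > 0" using S ap bp cp dp by (intro mult_pos_pos) auto
  have f2: "8*(a+d)*(1 - 2*(a+d)) > 0" using S ap bp cp dp by (intro mult_pos_pos) auto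
  have Rp: "R > 0" unfolding R_def e1 e2 using f1 f2 by simp
  have pc: "partial_corr p = 16 * D / R"
  proof -
    have m12: "bcorr (marg12 p) = 4*(b+a) - 1"
    proof -
      have r: "marg12 p 1 1 = b+a" "marg12 p 1 0 + marg12 p 1 1 = 1/2" "marg12 p 0 1 + marg12 p 1 1 = 1/2"
        unfolding marg12_def bin_def using S by (simp_all add: P algebra_simps)
      show ?thesis using bcorr_half[OF r(2) r(3)] r(1) by simp
    qed
    have m13: "bcorr (marg13 p) = 4*(c+a) - 1"
    proof -
      have r: "marg13 p 1 1 = c+a" "marg13 p 1 0 + marg13 p 1 1 = 1/2" "marg13 p 0 1 + marg13 p 1 1 = 1/2"
        unfolding marg13_def bin_def using S by (simp_all add: P algebra_simps)
      show ?thesis using bcorr_half[OF r(2) r(3)] r(1) by simp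
    qed
    have m23: "bcorr (marg23 p) = 4*(d+a) - 1"
    proof -
      have r: "marg23 p 1 1 = d+a" "marg23 p 1 0 + marg23 p 1 1 = 1/2" "marg23 p 0 1 + marg23 p 1 1 = 1/2"
        unfolding marg23_def bin_def using S by (simp_all add: P algebra_simps)
      show ?thesis using bcorr_half[OF r(2) r(3)] r(1) by simp
    qed
    have "partial_corr p = ((4*(a+b) - 1) - (4*(a+c) - 1) * (4*(a+d) - 1)) / R"
      unfolding partial_corr_def Let_def m12 m13 m23 R_def by (simp add: add.commute)
    also have "(4*(a+b) - 1) - (4*(a+c) - 1) * (4*(a+d) - 1) = 16 * D"
      unfolding D_def dd by (simp add: algebra_simps)
    finally show ?thesis .
  qed
  have rs: "(rho12_3cond p = 0 \<longleftrightarrow> D = 0) \<and> (rho12_3cond p > 0 \<longleftrightarrow> D > 0) \<and> (rho12_3cond p < 0 \<longleftrightarrow> D < 0)"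
    by (rule sgn_helper[OF rho _ Qp]) simp
  have ps: "(partial_corr p = 0 \<longleftrightarrow> D = 0) \<and> (partial_corr p > 0 \<longleftrightarrow> D > 0) \<and> (partial_corr p < 0 \<longleftrightarrow> D < 0)"
    by (rule sgn_helper[OF pc _ Rp]) simp
  show ?thesis using lamsg ci pos3 neg3 rs ps rho1 by auto
qed

end
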